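(* Let $P=\forall x_1,\dots,x_n\,\exists y_1(D_1),\dots,y_k(D_k)$ be a prefix, let $G_{\mathrm{syn}}$ be an admissible group w.r.t. $P$, and let $g\in G_{\mathrm{syn}}$. If $j\in\{1,\dots,k\}$ and $\sigma\in\mathcal A(X)$ are such that $[x]_\sigma=[g(x)]_\sigma$ for all $x\in D_j$ and $g(y_j)\in\operatorname{BF}(\{y_l\mid D_j=D_l\})$, then $[g(y_j)]_{\sigma_s}=[y_j]_{\sigma_{g(s)}}$ for all $s\in\mathcal S(P)$.
   Context: $X=\{x_1,\dots,x_n\}$, $Y=\{y_1,\dots,y_k\}$ are finite disjoint sets of propositional variables; $\operatorname{BF}(V)$ the propositional formulas over $V\subseteq X\cup Y$; $\mathcal A(V)$ the assignments $V\to\{\top,\bot\}$; $[\phi]_\sigma$ the truth value; $D_j\subseteq X$. An interpretation is $s=(s_1,\dots,s_k)$ with $s_j:\{\top,\bot\}^{|D_j|}\to\{\top,\bot\}$; $\mathcal S(P)$ the set of interpretations. For $\sigma\in\mathcal A(X)$, $\sigma_s\in\mathcal A(X\cup Y)$ equals $\sigma$ on $X$ and $\sigma_s(y_j)=s_j$ evaluated at $\sigma$'s values on $D_j$. For $g:\operatorname{BF}(V)\to\operatorname{BF}(V)$ and $\rho\in\mathcal A(V)$, $g(\rho)(v)=[g(v)]_\rho$; $g$ preserves propositional satisfiability if $[g(\phi)]_\rho=[\phi]_{g(\rho)}$ always. A formula in $\operatorname{BF}(Y)$ depends on $x_i$ if it contains some $y_j$ with $x_i\in D_j$. A bijection $g$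 of $\operatorname{BF}(X\cup Y)$ is admissible w.r.t. $P$ if it preserves propositional satisfiability, $g(x_i)\in\operatorname{BF}(X)$, $g(y_j)\in\operatorname{BF}(Y)$, and if $g(y_j)$ depends on $x_i$ then $g^{-1}(x_i)\in\operatorname{BF}(D_j)$. An admissible group is a subgroup of all admissible functions. For admissible $g$ and $\sigma\in\mathcal A(X)$, $g(\sigma)(x)=[g(x)]_\sigma$. For $g\in G_{\mathrm{syn}}$ and $s\in\mathcal S(P)$, $g(s)\in\mathcal S(P)$ is the (well-defined) interpretation $t$ with $\sigma_t=g(g^{-1}(\sigma)_s)$ for all $\sigma\in\mathcal A(X)$. *)

theory Defs
  imports Main
begin

text \<open>Propositional formulas over a variable type.  The variables are
  X \<union> Y, represented as the sum type 'x + 'y with x_i = Inl i, y_j = Inr j.\<close>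

datatype 'v form =
    FTop | FBot | Var 'v | FNot "'v form" | FAnd "'v form" "'v form"
  | FOr "'v form" "'v form" | FImp "'v form" "'v form" | FIff "'v form" "'v form"

primrec eval :: "('v \<Rightarrow> bool) \<Rightarrow> 'v form \<Rightarrow> bool" where
  "eval \<rho> FTop = True"
| "eval \<rho> FBot = False"
| "eval \<rho> (Var v) = \<rho> v"
| "eval \<rho> (FNot a) = (\<not> eval \<rho> a)"
| "eval \<rho> (FAnd a b) = (eval \<rho> a \<and> eval \<rho> b)"
| "eval \<rho> (FOr a b) = (eval \<rho> a \<or> eval \<rho> b)"
| "eval \<rho> (FImp a b) = (eval \<rho> a \<longrightarrow> eval \<rho> b)"
| "eval \<rho> (FIff a b) = (eval \<rho> a \<longleftrightarrow> eval \<rho> b)"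

primrec vars :: "'v form \<Rightarrow> 'v set" where
  "vars FTop = {}"
| "vars FBot = {}"
| "vars (Var v) = {v}"
| "vars (FNot a) = vars a"
| "vars (FAnd a b) = vars a \<union> vars b"
| "vars (FOr a b) = vars a \<union> vars b"
| "vars (FImp a b) = vars a \<union> vars b"
| "vars (FIff a b) = vars a \<union> vars b"

definition BF :: "'v set \<Rightarrow> 'v form set" where
  "BF V = {\<phi>. vars \<phi> \<subseteq> V}"

abbreviation Xs :: "('x + 'y) set" where "Xs \<equiv> range Inl"
abbreviation Ys :: "('x + 'y) set" where "Ys \<equiv> range Inr"

definition act_assign :: "('v form \<Rightarrow> 'v form) \<Rightarrow> ('v \<Rightarrow> bool) \<Rightarrow> ('v \<Rightarrow> bool)" where
  "act_assign g \<rho> = (\<lambda>v. eval \<rho> (g (Var v)))"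

definition preserves_sat :: "('v form \<Rightarrow> 'v form) \<Rightarrow> bool" where
  "preserves_sat g \<longleftrightarrow> (\<forall>\<phi> \<rho>. eval \<rho> (g \<phi>) = eval (act_assign g \<rho>) \<phi>)"

definition depends_on :: "('y \<Rightarrow> 'x set) \<Rightarrow> ('x + 'y) form \<Rightarrow> 'x \<Rightarrow> bool" where
  "depends_on D \<phi> x \<longleftrightarrow> (\<exists>y. Inr y \<in> vars \<phi> \<and> x \<in> D y)"

definition admissible :: "('y \<Rightarrow> 'x set) \<Rightarrow> (('x + 'y) form \<Rightarrow> ('x + 'y) form) \<Rightarrow> bool" where
  "admissible D g \<longleftrightarrow>
     bij g \<and> preserves_sat g \<and>
     (\<forall>x. g (Var (Inl x)) \<in> BF Xs) \<and>
     (\<forall>y. g (Var (Inr y)) \<in> BF Ys) \<and>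
     (\<forall>y x. depends_on D (g (Var (Inr y))) x \<longrightarrow> inv g (Var (Inl x)) \<in> BF (Inl ` D y))"

definition admissible_group :: "('y \<Rightarrow> 'x set) \<Rightarrow> (('x + 'y) form \<Rightarrow> ('x + 'y) form) set \<Rightarrow> bool" where
  "admissible_group D G \<longleftrightarrow>
     (\<forall>g\<in>G. admissible D g) \<and> id \<in> G \<and>
     (\<forall>g\<in>G. \<forall>h\<in>G. g \<circ> h \<in> G) \<and> (\<forall>g\<in>G. inv g \<in> G)"

text \<open>Interpretations: s_j is a Boolean function of the values of the variables in D_j,
  represented as a function of a full X-assignment that only depends on D_j.\<close>
definition interp :: "('y \<Rightarrow> 'x set) \<Rightarrow> ('y \<Rightarrow> ('x \<Rightarrow> bool) \<Rightarrow> bool) \<Rightarrow> bool" where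
  "interp D s \<longleftrightarrow> (\<forall>j \<sigma> \<tau>. (\<forall>x\<in>D j. \<sigma> x = \<tau> x) \<longrightarrow> s j \<sigma> = s j \<tau>)"

definition ext_assign :: "('x \<Rightarrow> bool) \<Rightarrow> ('y \<Rightarrow> ('x \<Rightarrow> bool) \<Rightarrow> bool) \<Rightarrow> ('x + 'y \<Rightarrow> bool)" where
  "ext_assign \<sigma> s = case_sum \<sigma> (\<lambda>j. s j \<sigma>)"

text \<open>g(\<sigma>)(x) = [g(x)]_\<sigma> for \<sigma> \<in> A(X) (g(x) \<in> BF(X), so values on Y are irrelevant).\<close>
definition act_X :: "(('x + 'y) form \<Rightarrow> ('x + 'y) form) \<Rightarrow> ('x \<Rightarrow> bool) \<Rightarrow> ('x \<Rightarrow> bool)" where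
  "act_X g \<sigma> = (\<lambda>x. eval (case_sum \<sigma> (\<lambda>_. False)) (g (Var (Inl x))))"

definition act_interp :: "('y \<Rightarrow> 'x set) \<Rightarrow> (('x + 'y) form \<Rightarrow> ('x + 'y) form)
    \<Rightarrow> ('y \<Rightarrow> ('x \<Rightarrow> bool) \<Rightarrow> bool) \<Rightarrow> ('y \<Rightarrow> ('x \<Rightarrow> bool) \<Rightarrow> bool)" where
  "act_interp D g s = (THE t. interp D t \<and>
     (\<forall>\<sigma>. ext_assign \<sigma> t = act_assign g (ext_assign (act_X (inv g) \<sigma>) s)))"

end

theory Submission
  imports Defs
begin

lemma eval_cong: "(\<And>v. v \<in> vars \<phi> \<Longrightarrow> \<rho> v = \<rho>' v) \<Longrightarrow> eval \<rho> \<phi> = eval \<rho>' \<phi>"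
  by (induction \<phi>) auto

lemma X_inv:
  assumes "preserves_sat h" "\<And>\<phi>. h (k \<phi>) = \<phi>" "k (Var (Inl x)) \<in> BF (range Inl)"
    "\<And>x'. \<rho> (Inl x') = act_X h \<sigma> x'"
  shows "eval \<rho> (k (Var (Inl x))) = \<sigma> x"
proof -
  have "\<sigma> x = eval (case_sum \<sigma> (\<lambda>_. False)) (h (k (Var (Inl x))))"
    using assms(2) by simp
  also have "\<dots> = eval (act_assign h (case_sum \<sigma> (\<lambda>_. False))) (k (Var (Inl x)))"
    using assms(1) unfolding preserves_sat_def by blast
  also have "\<dots> = eval \<rho> (k (Var (Inl x)))"
  proof (rule eval_cong)
    fix v assume "v \<in> vars (k (Var (Inl x)))"
    then obtain x' where "v = Inl x'" using assms(3) unfolding BF_def by blast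
    then show "act_assign h (case_sum \<sigma> (\<lambda>_. False)) v = \<rho> v"
      using assms(4) unfolding act_assign_def act_X_def by simp
  qed
  finally show ?thesis by simp
qed

theorem lemma7:
  fixes D :: "'y::finite \<Rightarrow> 'x::finite set"
    and G :: "(('x + 'y) form \<Rightarrow> ('x + 'y) form) set"
    and g :: "('x + 'y) form \<Rightarrow> ('x + 'y) form"
    and j :: 'y and \<sigma> :: "'x \<Rightarrow> bool"
  assumes "admissible_group D G"
    and "g \<in> G"
    and "\<forall>x\<in>D j. \<sigma> x = eval (case_sum \<sigma> (\<lambda>_. False)) (g (Var (Inl x)))"
    and "g (Var (Inr j)) \<in> BF (Inr ` {l. D j = D l})"
  shows "\<forall>s. interp D s \<longrightarrow>
           eval (ext_assign \<sigma> s) (g (Var (Inr j))) = ext_assign \<sigma> (act_interp D g s) (Inr j)"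
proof (intro allI impI)
  fix s assume s: "interp D s"
  have ag: "admissible D g" using assms(1,2) unfolding admissible_group_def by blast
  have aig: "admissible D (inv g)" using assms(1,2) unfolding admissible_group_def by blast
  have bij: "bij g" using ag unfolding admissible_def by blast
  have ig: "\<And>\<phi>. inv g (g \<phi>) = \<phi>" using bij by (simp add: bij_is_inj)
  have gi: "\<And>\<phi>. g (inv g \<phi>) = \<phi>" using bij by (simp add: bij_is_surj surj_f_inv_f)
  have psg: "preserves_sat g" using ag unfolding admissible_def by blast
  have psig: "preserves_sat (inv g)" using aig unfolding admissible_def by blast
  have gX: "\<And>x. g (Var (Inl x)) \<in> BF (range Inl)" using ag unfolding admissible_def by blast
  have igX: "\<And>x. inv g (Var (Inl x)) \<in> BF (range Inl)" using aig unfolding admissible_def by blast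
  have gY: "\<And>y. g (Var (Inr y)) \<in> BF (range Inr)" using ag unfolding admissible_def by blast
  have dep: "\<And>y x. depends_on D (g (Var (Inr y))) x \<Longrightarrow> inv g (Var (Inl x)) \<in> BF (Inl ` D y)"
    using ag unfolding admissible_def by blast
  define t where "t = (\<lambda>j' \<sigma>'. eval (ext_assign (act_X (inv g) \<sigma>') s) (g (Var (Inr j'))))"
  have ti: "interp D t"
    unfolding interp_def
  proof (intro allI impI)
    fix j' and \<sigma>1 \<sigma>2 :: "'x \<Rightarrow> bool" assume ag12: "\<forall>x\<in>D j'. \<sigma>1 x = \<sigma>2 x"
    show "t j' \<sigma>1 = t j' \<sigma>2" unfolding t_def
    proof (rule eval_cong)
      fix v assume v: "v \<in> vars (g (Var (Inr j')))"
      then obtain l where l: "v = Inr l" using gY unfolding BF_def by blast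
      have "s l (act_X (inv g) \<sigma>1) = s l (act_X (inv g) \<sigma>2)"
        using s unfolding interp_def
      proof (elim allE impE)
        show "\<forall>x\<in>D l. act_X (inv g) \<sigma>1 x = act_X (inv g) \<sigma>2 x"
        proof
          fix x assume "x \<in> D l"
          then have "depends_on D (g (Var (Inr j'))) x" using v l unfolding depends_on_def by blast
          then have b: "inv g (Var (Inl x)) \<in> BF (Inl ` D j')" by (rule dep)
          show "act_X (inv g) \<sigma>1 x = act_X (inv g) \<sigma>2 x" unfolding act_X_def
            by (rule eval_cong) (use b ag12 in \<open>auto simp: BF_def\<close>)
        qed
      qed
      then show "ext_assign (act_X (inv g) \<sigma>1) s v = ext_assign (act_X (inv g) \<sigma>2) s v"
        using l unfolding ext_assign_def by simp
    qed
  qed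
  have teq: "\<forall>\<sigma>'. ext_assign \<sigma>' t = act_assign g (ext_assign (act_X (inv g) \<sigma>') s)"
  proof
    fix \<sigma>'
    show "ext_assign \<sigma>' t = act_assign g (ext_assign (act_X (inv g) \<sigma>') s)"
    proof
      fix v show "ext_assign \<sigma>' t v = act_assign g (ext_assign (act_X (inv g) \<sigma>') s) v"
      proof (cases v)
        case (Inl x)
        have "eval (ext_assign (act_X (inv g) \<sigma>') s) (g (Var (Inl x))) = \<sigma>' x"
          by (rule X_inv[OF psig ig gX]) (simp add: ext_assign_def)
        then show ?thesis using Inl by (simp add: ext_assign_def act_assign_def)
      next
        case (Inr y)
        then show ?thesis by (simp add: ext_assign_def act_assign_def t_def)
      qed
    qed
  qed
  have ai: "act_interp D g s = t"
    unfolding act_interp_def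
  proof (rule the_equality)
    show "interp D t \<and> (\<forall>\<sigma>. ext_assign \<sigma> t = act_assign g (ext_assign (act_X (inv g) \<sigma>) s))"
      using ti teq by blast
  next
    fix t' assume h: "interp D t' \<and> (\<forall>\<sigma>. ext_assign \<sigma> t' = act_assign g (ext_assign (act_X (inv g) \<sigma>) s))"
    show "t' = t"
    proof (intro ext)
      fix j' \<sigma>'
      have "t' j' \<sigma>' = ext_assign \<sigma>' t' (Inr j')" by (simp add: ext_assign_def)
      also have "\<dots> = ext_assign \<sigma>' t (Inr j')" using h teq by simp
      finally show "t' j' \<sigma>' = t j' \<sigma>'" by (simp add: ext_assign_def)
    qed
  qed
  show "eval (ext_assign \<sigma> s) (g (Var (Inr j))) = ext_assign \<sigma> (act_interp D g s) (Inr j)"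
    unfolding ai
  proof -
    have "eval (ext_assign \<sigma> s) (g (Var (Inr j))) = eval (ext_assign (act_X (inv g) \<sigma>) s) (g (Var (Inr j)))"
    proof (rule eval_cong)
      fix v assume v: "v \<in> vars (g (Var (Inr j)))"
      then obtain l where l: "v = Inr l" "D j = D l" using assms(4) unfolding BF_def by blast
      have "s l \<sigma> = s l (act_X (inv g) \<sigma>)"
        using s unfolding interp_def
      proof (elim allE impE)
        show "\<forall>x\<in>D l. \<sigma> x = act_X (inv g) \<sigma> x"
        proof
          fix x assume x: "x \<in> D l"
          then have "depends_on D (g (Var (Inr j))) x" using v l unfolding depends_on_def by blast
          then have b: "inv g (Var (Inl x)) \<in> BF (Inl ` D j)" by (rule dep)
          have "act_X (inv g) \<sigma> x = eval (case_sum (act_X g \<sigma>) (\<lambda>_. False)) (inv g (Var (Inl x)))"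
            unfolding act_X_def
            by (rule eval_cong) (use b assms(3) in \<open>auto simp: BF_def act_X_def\<close>)
          also have "\<dots> = \<sigma> x"
            by (rule X_inv[OF psg gi igX]) simp
          finally show "\<sigma> x = act_X (inv g) \<sigma> x" by simp
        qed
      qed
      then show "ext_assign \<sigma> s v = ext_assign (act_X (inv g) \<sigma>) s v"
        using l unfolding ext_assign_def by simp
    qed
    then show "eval (ext_assign \<sigma> s) (g (Var (Inr j))) = ext_assign \<sigma> t (Inr j)"
      by (simp add: ext_assign_def t_def)
  qed
qed

end
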